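(* Let $G\in\mathrm{C}^1(\mathbb{R})$ be coercive and $V\in\mathrm{Lip}(\mathbb{R})$ be $1$-periodic. For all $\theta_1,\theta_2\in\mathbb{R}$ with $\theta_1<\theta_2$, the function $g_{\theta_1,\theta_2}=f_{\theta_2}-f_{\theta_1}$ satisfies $$(\theta_2-\theta_1)e^{-K_1(\theta_1,\theta_2)}\le g_{\theta_1,\theta_2}(x)\le(\theta_2-\theta_1)e^{K_1(\theta_1,\theta_2)}\quad\text{for all }x\in\mathbb{R},$$ where $K_1(\theta_1,\theta_2)=\max\{|G'(p)|:\,\min_{x\in[0,1]}f_{\theta_1}(x)\le p\le\max_{x\in[0,1]}f_{\theta_2}(x)\}$.
   Context: $G$ coercive means $G(p)\to\infty$ as $p\to\pm\infty$. For each $\theta\in\mathbb{R}$, $f_\theta\in\mathrm{C}^1(\mathbb{R})$ denotes the unique $1$-periodic function such that $\int_0^1 f_\theta(x)dx=\theta$ and, for some (unique) constant $\overline{H}(\theta)\in\mathbb{R}$, $f_\theta'(x)+G(f_\theta(x))+V(x)=\overline{H}(\theta)$ for all $x\in\mathbb{R}$. *)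

theory Defs
  imports "HOL-Analysis.Analysis"
begin

definition K1 :: "(real \<Rightarrow> real) \<Rightarrow> (real \<Rightarrow> real \<Rightarrow> real) \<Rightarrow> real \<Rightarrow> real \<Rightarrow> real" where
  "K1 G' f \<theta>1 \<theta>2 =
     Sup ((\<lambda>p. \<bar>G' p\<bar>) ` {Inf (f \<theta>1 ` {0..1}) .. Sup (f \<theta>2 ` {0..1})})"

end

theory Submission
  imports Defs
begin


lemma per_nat:
  fixes \<phi> :: "real \<Rightarrow> real"
  assumes "\<And>x. \<phi> (x + 1) = \<phi> x"
  shows "\<phi> (x + real n) = \<phi> x"
proof (induction n)
  case (Suc n)
  have "x + real (Suc n) = (x + real n) + 1" by simp
  then have "\<phi> (x + real (Suc n)) = \<phi> (x + real n)" using assms by metis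
  then show ?case using Suc by simp
qed simp

lemma per_int:
  fixes \<phi> :: "real \<Rightarrow> real"
  assumes "\<And>x. \<phi> (x + 1) = \<phi> x"
  shows "\<phi> (x + real_of_int k) = \<phi> x"
proof (cases "k \<ge> 0")
  case True
  then have e: "real_of_int k = real (nat k)" by simp
  have "\<phi> (x + real (nat k)) = \<phi> x" by (rule per_nat[of \<phi>, OF assms])
  then show ?thesis unfolding e .
next
  case False
  then have k: "real_of_int k = - real (nat (-k))" by simp
  have "\<phi> ((x + real_of_int k) + real (nat (-k))) = \<phi> (x + real_of_int k)"
    by (rule per_nat[of \<phi>, OF assms])
  moreover have "(x + real_of_int k) + real (nat (-k)) = x" unfolding k by simp
  ultimately show ?thesis by simp
qed
lemma per_reduce:
  fixes \<phi> :: "real \<Rightarrow> real"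
  assumes "\<And>x. \<phi> (x + 1) = \<phi> x"
  shows "\<exists>t\<in>{0..1}. \<phi> x = \<phi> t"
proof -
  have "\<phi> ((x - of_int \<lfloor>x\<rfloor>) + of_int \<lfloor>x\<rfloor>) = \<phi> (x - of_int \<lfloor>x\<rfloor>)"
    by (rule per_int[of \<phi>, OF assms])
  moreover have "x - of_int \<lfloor>x\<rfloor> \<in> {0..1}"
    using floor_correct[of x] by (simp add: algebra_simps)
  ultimately show ?thesis by force
qed

lemma per_bounds:
  fixes \<phi> :: "real \<Rightarrow> real"
  assumes "\<And>x. \<phi> (x + 1) = \<phi> x" "continuous_on UNIV \<phi>"
  shows "Inf (\<phi> ` {0..1}) \<le> \<phi> x \<and> \<phi> x \<le> Sup (\<phi> ` {0..1})"
proof -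
  obtain t where t: "t \<in> {0..1}" "\<phi> x = \<phi> t" using per_reduce[of \<phi>, OF assms(1)] by blast
  have "compact (\<phi> ` {0..1})"
    by (rule compact_continuous_image) (auto intro: continuous_on_subset[OF assms(2)])
  then have "bounded (\<phi> ` {0..1})" by (rule compact_imp_bounded)
  then have "bdd_above (\<phi> ` {0..1})" "bdd_below (\<phi> ` {0..1})"
    by (auto simp: bounded_imp_bdd_above bounded_imp_bdd_below)
  moreover have "\<phi> t \<in> \<phi> ` {0..1}" using t(1) by blast
  ultimately show ?thesis unfolding t(2) by (meson cInf_lower cSup_upper)
qed

lemma pos_forward:
  fixes g d :: "real \<Rightarrow> real"
  assumes der: "\<And>t. (g has_real_derivative d t) (at t)"
    and dl: "\<And>t. g t \<ge> 0 \<Longrightarrow> d t \<ge> - L * g t"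
    and gy: "g y > 0" and ty: "t \<ge> y"
  shows "g t > 0"
proof (rule ccontr)
  assume "\<not> g t > 0"
  then have gt: "g t \<le> 0" by simp
  have cont: "continuous_on UNIV g"
    using der by (meson DERIV_isCont continuous_at_imp_continuous_on)
  define S where "S = {s. y \<le> s \<and> s \<le> t \<and> g s \<le> 0}"
  have tS: "t \<in> S" using gt ty by (simp add: S_def)
  have clS: "closed S"
  proof -
    have "S = {y..t} \<inter> g -` {..0}" by (auto simp: S_def)
    moreover have "closed (g -` {..0})"
      using cont by (simp add: closed_vimage)
    ultimately show ?thesis by auto
  qed
  have bS: "bdd_below S" by (auto simp: S_def bdd_below_def)
  define s0 where "s0 = Inf S"
  have s0S: "s0 \<in> S" unfolding s0_def using clS bS tS closed_contains_Inf by blast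
  have below: "\<And>u. u \<in> S \<Longrightarrow> s0 \<le> u" unfolding s0_def using bS by (simp add: cInf_lower)
  have ys0: "y \<le> s0" "g s0 \<le> 0" "s0 \<le> t" using s0S by (auto simp: S_def)
  obtain z where z: "y \<le> z" "z \<le> s0" "g z = 0"
    using IVT2[of g s0 0 y] ys0 gy cont by (auto simp: continuous_on_eq_continuous_at)
  have "z \<in> S" using z ys0 by (auto simp: S_def)
  then have "z = s0" using below z by force
  have nonneg: "g u \<ge> 0" if "y \<le> u" "u \<le> s0" for u
  proof (rule ccontr)
    assume "\<not> g u \<ge> 0"
    then have "u \<in> S" using that ys0 by (auto simp: S_def)
    then have "s0 \<le> u" by (rule below)
    then have "u = s0" using that by simp
    then show False using \<open>\<not> g u \<ge> 0\<close> z \<open>z = s0\<close> by simp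
  qed
  define h where "h u = g u * exp (L * u)" for u
  have "h y \<le> h s0"
  proof (rule DERIV_nonneg_imp_nondecreasing[OF ys0(1)])
    fix u assume u: "y \<le> u" "u \<le> s0"
    have "(h has_real_derivative d u * exp (L * u) + g u * (exp (L * u) * L)) (at u)"
      unfolding h_def
      by (auto intro!: derivative_eq_intros der)
    moreover have "d u * exp (L * u) + g u * (exp (L * u) * L) \<ge> 0"
    proof -
      have "d u + L * g u \<ge> 0" using dl[OF nonneg[OF u]] by simp
      then have "(d u + L * g u) * exp (L * u) \<ge> 0" by simp
      then show ?thesis by (simp add: algebra_simps)
    qed
    ultimately show "\<exists>y. (h has_real_derivative y) (at u) \<and> 0 \<le> y" by blast
  qed
  moreover have "h y > 0" using gy by (simp add: h_def)
  moreover have "h s0 = 0" using z \<open>z = s0\<close> by (simp add: h_def)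
  ultimately show False by simp
qed


lemma G_mvt:
  fixes G G' :: "real \<Rightarrow> real"
  assumes der: "\<And>p. (G has_real_derivative G' p) (at p)"
    and bd: "\<And>p. p \<in> {a..b} \<Longrightarrow> \<bar>G' p\<bar> \<le> L"
    and u: "u \<in> {a..b}" and v: "v \<in> {a..b}"
  shows "\<bar>G v - G u\<bar> \<le> L * \<bar>v - u\<bar>"
proof -
  have key: "\<bar>G s - G r\<bar> \<le> L * \<bar>s - r\<bar>" if rs: "r < s" "r \<in> {a..b}" "s \<in> {a..b}" for r s
  proof -
    obtain z where z: "r < z" "z < s" "G s - G r = (s - r) * G' z"
      using MVT2[of r s G G'] rs der by blast
    have "z \<in> {a..b}" using z rs by auto
    then have "\<bar>G' z\<bar> \<le> L" by (rule bd)
    then have "\<bar>s - r\<bar> * \<bar>G' z\<bar> \<le> \<bar>s - r\<bar> * L" by (simp add: mult_left_mono)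
    then show ?thesis using z by (simp add: abs_mult mult.commute)
  qed
  consider "u < v" | "u = v" | "v < u" by linarith
  then show ?thesis
  proof cases
    case 1 then show ?thesis using key u v by blast
  next
    case 2 then show ?thesis by simp
  next
    case 3 then have "\<bar>G u - G v\<bar> \<le> L * \<bar>u - v\<bar>" using key u v by blast
    then show ?thesis by (simp add: abs_minus_commute)
  qed
qed

lemma exp_shift:
  fixes a b K s t :: real
  assumes "a * exp (K * s) \<le> b * exp (K * t)" "t - s \<le> 1" "K \<ge> 0" "b > 0" "s \<le> t"
  shows "a \<le> b * exp K"
proof -
  have "a = a * exp (K * s) * exp (- (K * s))" by (simp add: exp_minus)
  also have "\<dots> \<le> b * exp (K * t) * exp (- (K * s))"
    using assms(1) by (simp add: mult_right_mono)
  also have "\<dots> = b * exp (K * (t - s))" by (simp add: exp_diff right_diff_distrib exp_minus field_simps)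
  also have "\<dots> \<le> b * exp K"
  proof -
    have "K * (t - s) \<le> K * 1" using assms by (intro mult_left_mono) auto
    then show ?thesis using assms(4) by simp
  qed
  finally show ?thesis .
qed



theorem lemma4p4:
  fixes G G' V :: "real \<Rightarrow> real"
    and f :: "real \<Rightarrow> real \<Rightarrow> real"
    and Hbar :: "real \<Rightarrow> real"
    and \<theta>1 \<theta>2 :: real
  assumes G_deriv: "\<And>p. (G has_real_derivative G' p) (at p)"
    and G'_cont: "continuous_on UNIV G'"
    and G_coercive: "filterlim G at_top at_top" "filterlim G at_top at_bot"
    and V_lip: "\<exists>L. L-lipschitz_on UNIV V"
    and V_per: "\<And>x. V (x + 1) = V x"
    and f_per: "\<And>\<theta> x. f \<theta> (x + 1) = f \<theta> x"
    and f_C1: "\<And>\<theta>. continuous_on UNIV (deriv (f \<theta>))"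
    and f_ode: "\<And>\<theta> x. (f \<theta> has_real_derivative (Hbar \<theta> - G (f \<theta> x) - V x)) (at x)"
    and f_int: "\<And>\<theta>. integral {0..1} (f \<theta>) = \<theta>"
    and lt: "\<theta>1 < \<theta>2"
  shows "\<forall>x. (\<theta>2 - \<theta>1) * exp (- K1 G' f \<theta>1 \<theta>2) \<le> f \<theta>2 x - f \<theta>1 x
            \<and> f \<theta>2 x - f \<theta>1 x \<le> (\<theta>2 - \<theta>1) * exp (K1 G' f \<theta>1 \<theta>2)"
proof -
  define g where "g x = f \<theta>2 x - f \<theta>1 x" for x
  define c where "c = Hbar \<theta>2 - Hbar \<theta>1"
  define D where "D x = G (f \<theta>2 x) - G (f \<theta>1 x)" for x
  have gder: "(g has_real_derivative (c - D x)) (at x)" for x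
  proof -
    have "(g has_real_derivative ((Hbar \<theta>2 - G (f \<theta>2 x) - V x) - (Hbar \<theta>1 - G (f \<theta>1 x) - V x))) (at x)"
      unfolding g_def by (intro DERIV_diff f_ode)
    moreover have "(Hbar \<theta>2 - G (f \<theta>2 x) - V x) - (Hbar \<theta>1 - G (f \<theta>1 x) - V x) = c - D x"
      by (simp add: c_def D_def)
    ultimately show ?thesis by simp
  qed
  have fcont: "continuous_on UNIV (f \<theta>)" for \<theta>
    using f_ode by (meson DERIV_isCont continuous_at_imp_continuous_on)
  have gcont: "continuous_on UNIV g"
    using gder by (meson DERIV_isCont continuous_at_imp_continuous_on)
  have gper: "g (x + 1) = g x" for x unfolding g_def using f_per by simp
  have gint: "integral {0..1} g = \<theta>2 - \<theta>1"
  proof -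
    have "integral {0..1} (\<lambda>x. f \<theta>2 x - f \<theta>1 x) = integral {0..1} (f \<theta>2) - integral {0..1} (f \<theta>1)"
      by (intro Henstock_Kurzweil_Integration.integral_diff integrable_continuous_interval
          continuous_on_subset[OF fcont]) auto
    then show ?thesis using f_int by (simp add: g_def[abs_def])
  qed
  have gintable: "g integrable_on {0..1}"
    by (intro integrable_continuous_interval continuous_on_subset[OF gcont]) auto
  define lo where "lo = min (Inf (f \<theta>1 ` {0..1})) (Inf (f \<theta>2 ` {0..1}))"
  define hi where "hi = max (Sup (f \<theta>1 ` {0..1})) (Sup (f \<theta>2 ` {0..1}))"
  have frange: "f \<theta>1 x \<in> {lo..hi}" "f \<theta>2 x \<in> {lo..hi}" for x
    using per_bounds[of "f \<theta>1" x, OF f_per fcont] per_bounds[of "f \<theta>2" x, OF f_per fcont]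
    unfolding lo_def hi_def by auto
  obtain L where L: "\<And>p. p \<in> {lo..hi} \<Longrightarrow> \<bar>G' p\<bar> \<le> L"
  proof -
    have "compact (G' ` {lo..hi})"
      by (rule compact_continuous_image) (auto intro: continuous_on_subset[OF G'_cont])
    then have "bounded (G' ` {lo..hi})" by (rule compact_imp_bounded)
    then obtain B where "\<forall>y\<in>G' ` {lo..hi}. norm y \<le> B" unfolding bounded_iff by blast
    then have "\<And>p. p \<in> {lo..hi} \<Longrightarrow> \<bar>G' p\<bar> \<le> B" by auto
    then show ?thesis by (rule that)
  qed
  have DL: "\<bar>D x\<bar> \<le> L * \<bar>g x\<bar>" for x
    unfolding D_def g_def by (rule G_mvt[OF G_deriv L frange(1) frange(2)])
  obtain y where gy: "g y > 0"
  proof (rule ccontr)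
    assume "\<not> thesis"
    then have neg: "\<forall>x. g x \<le> 0" using that by (meson not_le)
    have "integral {0..1} g \<le> integral {0..1} (\<lambda>_::real. 0::real)"
      by (rule Henstock_Kurzweil_Integration.integral_le[OF gintable]) (use neg in auto)
    then show False using gint lt by simp
  qed
  have gpos: "g x > 0" for x
  proof (cases "c \<ge> 0")
    case True
    have dl: "c - D t \<ge> - L * g t" if "g t \<ge> 0" for t
      using DL[of t] that True by (simp add: abs_le_iff)
    define k where "k = \<lceil>y - x\<rceil>"
    have "x + real_of_int k \<ge> y" unfolding k_def by linarith
    then have "g (x + real_of_int k) > 0" using pos_forward[OF gder, of L y "x + real_of_int k"] dl gy by blast
    then show ?thesis using per_int[of g, OF gper] by simp
  next
    case False
    define g2 where "g2 t = g (- t)" for t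
    have g2der: "(g2 has_real_derivative (- (c - D (- t)))) (at t)" for t
      unfolding g2_def using DERIV_mirror[where f=g and x=t and y="c - D (-t)"] gder[of "-t"] by simp
    have dl: "- (c - D (- t)) \<ge> - L * g2 t" if "g2 t \<ge> 0" for t
      using DL[of "-t"] that False unfolding g2_def by (simp add: abs_le_iff)
    have gy2: "g2 (- y) > 0" using gy by (simp add: g2_def)
    define k where "k = \<lfloor>y - x\<rfloor>"
    have "- (x + real_of_int k) \<ge> - y" unfolding k_def by linarith
    then have "g2 (- (x + real_of_int k)) > 0"
      using pos_forward[OF g2der, of L "- y" "- (x + real_of_int k)"] dl gy2 by blast
    then have "g (x + real_of_int k) > 0" by (simp add: g2_def add.commute)
    then show ?thesis using per_int[of g, OF gper] by simp
  qed
  define a where "a = Inf (f \<theta>1 ` {0..1})"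
  define b where "b = Sup (f \<theta>2 ` {0..1})"
  define K where "K = K1 G' f \<theta>1 \<theta>2"
  have Kdef: "K = Sup ((\<lambda>p. \<bar>G' p\<bar>) ` {a..b})" unfolding K_def K1_def a_def b_def ..
  have Kbd: "\<bar>G' p\<bar> \<le> K" if "p \<in> {a..b}" for p
  proof -
    have "compact ((\<lambda>p. \<bar>G' p\<bar>) ` {a..b})"
      by (rule compact_continuous_image)
        (auto intro!: continuous_intros intro: continuous_on_subset[OF G'_cont])
    then have "bdd_above ((\<lambda>p. \<bar>G' p\<bar>) ` {a..b})"
      by (simp add: bounded_imp_bdd_above compact_imp_bounded)
    then show ?thesis unfolding Kdef using that by (simp add: cSup_upper)
  qed
  have fab: "f \<theta>1 x \<in> {a..b}" "f \<theta>2 x \<in> {a..b}" for x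
  proof -
    have "a \<le> f \<theta>1 x" "f \<theta>2 x \<le> b"
      using per_bounds[of "f \<theta>1" x, OF f_per fcont] per_bounds[of "f \<theta>2" x, OF f_per fcont]
      unfolding a_def b_def by auto
    moreover have "f \<theta>1 x < f \<theta>2 x" using gpos[of x] by (simp add: g_def)
    ultimately show "f \<theta>1 x \<in> {a..b}" "f \<theta>2 x \<in> {a..b}" by auto
  qed
  have K0: "K \<ge> 0" using Kbd[OF fab(1)[of 0]] by linarith
  have DK: "\<bar>D x\<bar> \<le> K * g x" for x
    using G_mvt[OF G_deriv Kbd fab(1)[of x] fab(2)[of x]] gpos[of x]
    unfolding D_def g_def by simp
  have harn: "g x \<le> g z * exp K" for x z
  proof (cases "c \<ge> 0")
    case True
    define h where "h t = g t * exp (K * t)" for t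
    have hmono: "h s \<le> h t" if "s \<le> t" for s t
    proof (rule DERIV_nonneg_imp_nondecreasing[OF that])
      fix u
      have "(h has_real_derivative (c - D u) * exp (K * u) + g u * (exp (K * u) * K)) (at u)"
        unfolding h_def by (auto intro!: derivative_eq_intros gder)
      moreover have "(c - D u) * exp (K * u) + g u * (exp (K * u) * K) \<ge> 0"
      proof -
        have "c - D u + K * g u \<ge> 0" using DK[of u] True by (simp add: abs_le_iff)
        then have "(c - D u + K * g u) * exp (K * u) \<ge> 0" by simp
        then show ?thesis by (simp add: algebra_simps)
      qed
      ultimately show "\<exists>y. (h has_real_derivative y) (at u) \<and> 0 \<le> y" by blast
    qed
    define k where "k = \<lceil>x - z\<rceil>"
    define z' where "z' = z + real_of_int k"
    have z': "x \<le> z'" "z' - x \<le> 1" unfolding z'_def k_def by linarith+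
    have gz: "g z' = g z" unfolding z'_def by (rule per_int[of g, OF gper])
    have "g x * exp (K * x) \<le> g z' * exp (K * z')" using hmono[OF z'(1)] by (simp add: h_def)
    then have "g x \<le> g z' * exp K" by (rule exp_shift) (use z' K0 gpos in auto)
    then show ?thesis using gz by simp
  next
    case False
    define h where "h t = g t * exp (- K * t)" for t
    have hmono: "h t \<le> h s" if "s \<le> t" for s t
    proof (rule DERIV_nonpos_imp_nonincreasing[OF that])
      fix u
      have "(h has_real_derivative (c - D u) * exp (- K * u) + g u * (exp (- K * u) * (- K))) (at u)"
        unfolding h_def by (auto intro!: derivative_eq_intros gder)
      moreover have "(c - D u) * exp (- K * u) + g u * (exp (- K * u) * (- K)) \<le> 0"
      proof -
        have "c - D u - K * g u \<le> 0" using DK[of u] False by (simp add: abs_le_iff)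
        then have "(c - D u - K * g u) * exp (- K * u) \<le> 0" by (simp add: mult_nonpos_nonneg)
        then show ?thesis by (simp add: algebra_simps)
      qed
      ultimately show "\<exists>y. (h has_real_derivative y) (at u) \<and> y \<le> 0" by blast
    qed
    define k where "k = \<lfloor>x - z\<rfloor>"
    define z' where "z' = z + real_of_int k"
    have z': "z' \<le> x" "x - z' \<le> 1" unfolding z'_def k_def by linarith+
    have gz: "g z' = g z" unfolding z'_def by (rule per_int[of g, OF gper])
    have "g x * exp (- K * x) \<le> g z' * exp (- K * z')" using hmono[OF z'(1)] by (simp add: h_def)
    then have "g x * exp (K * (- x)) \<le> g z' * exp (K * (- z'))" by simp
    then have "g x \<le> g z' * exp K" by (rule exp_shift) (use z' K0 gpos in auto)
    then show ?thesis using gz by simp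
  qed
  have gc01: "continuous_on {0..1} g" by (rule continuous_on_subset[OF gcont]) auto
  obtain xm where xm: "xm \<in> {0..1}" "\<And>y. y \<in> {0..1} \<Longrightarrow> g xm \<le> g y"
    using continuous_attains_inf[OF compact_Icc _ gc01] by auto
  obtain xM where xM: "xM \<in> {0..1}" "\<And>y. y \<in> {0..1} \<Longrightarrow> g y \<le> g xM"
    using continuous_attains_sup[OF compact_Icc _ gc01] by auto
  have m_le: "g xm \<le> \<theta>2 - \<theta>1"
  proof -
    have "integral {0..1} (\<lambda>_::real. g xm) \<le> integral {0..1} g"
      by (rule Henstock_Kurzweil_Integration.integral_le[OF _ gintable]) (auto intro: xm(2))
    then show ?thesis using gint by simp
  qed
  have M_ge: "\<theta>2 - \<theta>1 \<le> g xM"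
  proof -
    have "integral {0..1} g \<le> integral {0..1} (\<lambda>_::real. g xM)"
      by (rule Henstock_Kurzweil_Integration.integral_le[OF gintable]) (auto intro: xM(2))
    then show ?thesis using gint by simp
  qed
  show ?thesis
  proof (intro allI conjI)
    fix x
    have "\<theta>2 - \<theta>1 \<le> g x * exp K" using M_ge harn[of xM x] by linarith
    then have "(\<theta>2 - \<theta>1) * exp (- K) \<le> g x * exp K * exp (- K)"
      by (simp add: mult_right_mono)
    also have "\<dots> = g x" by (simp add: exp_minus)
    finally show "(\<theta>2 - \<theta>1) * exp (- K1 G' f \<theta>1 \<theta>2) \<le> f \<theta>2 x - f \<theta>1 x"
      unfolding K_def g_def .
  next
    fix x
    have "g x \<le> g xm * exp K" by (rule harn)
    also have "\<dots> \<le> (\<theta>2 - \<theta>1) * exp K" using m_le by (simp add: mult_right_mono)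
    finally show "f \<theta>2 x - f \<theta>1 x \<le> (\<theta>2 - \<theta>1) * exp (K1 G' f \<theta>1 \<theta>2)"
      unfolding K_def g_def .
  qed
qed

end
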